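(* Let $v\ge 2$ and $k\ge 2$ be integers with $k$ even. Then there exists an AOA$(1,k-1,k,v)$.
   Context: An orthogonal array OA$(t,k,v)$ (with $1\le t\le k$) is a $v^t\times k$ array with entries from a set $X$ of size $v$ such that, for every choice of $t$ of its columns, each $t$-tuple in $X^t$ appears exactly once as a row of the corresponding $v^t\times t$ subarray. For integers $1\le s\le t\le k$, an augmented orthogonal array AOA$(s,t,k,v)$ is a $v^t\times(k+1)$ array $A$ such that: (1) the first $k$ columns of $A$ form an OA$(t,k,v)$ on a symbol set $X$ of size $v$; (2) the last column of $A$ has entries from a set $Y$ of size $v^{t-s}$; (3) for any choice of $s$ of the first $k$ columns, these $s$ columns together with the last column contain every $(s+1)$-tuple of $X^s\times Y$ exactly once as a row. *)

theory Defs
  imports Main "HOL-Library.FuncSet"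
begin

text \<open>An array with N rows is a function A :: nat => nat => 'a, where A r c is the
entry in row r < N and column c. Rows are indexed by {0..<N}, columns by {0..<k}.\<close>

definition is_OA :: "nat \<Rightarrow> nat \<Rightarrow> nat \<Rightarrow> 'a set \<Rightarrow> (nat \<Rightarrow> nat \<Rightarrow> 'a) \<Rightarrow> bool" where
  "is_OA t k v X A \<longleftrightarrow>
     1 \<le> t \<and> t \<le> k \<and> finite X \<and> card X = v \<and>
     (\<forall>r < v ^ t. \<forall>c < k. A r c \<in> X) \<and>
     (\<forall>C. C \<subseteq> {0..<k} \<and> card C = t \<longrightarrow>
        (\<forall>f \<in> C \<rightarrow>\<^sub>E X. \<exists>!r. r < v ^ t \<and> (\<forall>c\<in>C. A r c = f c)))"

definition is_AOA :: "nat \<Rightarrow> nat \<Rightarrow> nat \<Rightarrow> nat \<Rightarrow> 'a set \<Rightarrow> 'a set \<Rightarrow> (nat \<Rightarrow> nat \<Rightarrow> 'a) \<Rightarrow> bool" where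
  "is_AOA s t k v X Y A \<longleftrightarrow>
     1 \<le> s \<and> s \<le> t \<and> t \<le> k \<and>
     is_OA t k v X A \<and>
     finite Y \<and> card Y = v ^ (t - s) \<and>
     (\<forall>r < v ^ t. A r k \<in> Y) \<and>
     (\<forall>C. C \<subseteq> {0..<k} \<and> card C = s \<longrightarrow>
        (\<forall>f \<in> C \<rightarrow>\<^sub>E X. \<forall>y \<in> Y.
           \<exists>!r. r < v ^ t \<and> (\<forall>c\<in>C. A r c = f c) \<and> A r k = y))"

end

theory Submission
  imports Defs
begin

lemma ex1_uniq:
  assumes "\<exists>!\<rho>. \<rho> \<in> R \<and> P \<rho>" "a \<in> R" "P a" "b \<in> R" "P b"
  shows "a = b"
  using assms by blast

lemma inv_PiE:
  assumes p: "bij_betw p X' X" and f: "f \<in> C \<rightarrow>\<^sub>E X"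
  shows "restrict (\<lambda>c. inv_into X' p (f c)) C \<in> C \<rightarrow>\<^sub>E X'"
proof -
  have "inv_into X' p (f c) \<in> X'" if "c \<in> C" for c
  proof -
    have "f c \<in> X" using f that by (rule PiE_mem)
    then have "f c \<in> p ` X'" using p by (simp add: bij_betw_def)
    then show ?thesis by (rule inv_into_into)
  qed
  then show ?thesis by simp
qed

lemma inv_mem:
  assumes q: "bij_betw q Y' Y" and y: "y \<in> Y"
  shows "inv_into Y' q y \<in> Y'"
  using q y by (metis bij_betw_def inv_into_into)

lemma uniq_transport:
  fixes N :: nat
  assumes g: "bij_betw g {0..<N} R"
    and ex: "\<exists>!\<rho>. \<rho> \<in> R \<and> P \<rho>"
    and eq: "\<And>r. r < N \<Longrightarrow> Q r \<longleftrightarrow> P (g r)"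
  shows "\<exists>!r. r < N \<and> Q r"
proof -
  obtain \<rho> where r: "\<rho> \<in> R" "P \<rho>" using ex by blast
  define r0 where "r0 = inv_into {0..<N} g \<rho>"
  have r0: "r0 < N" "g r0 = \<rho>"
    using r g unfolding r0_def
    using bij_betw_apply[OF bij_betw_inv_into[OF g]] bij_betw_inv_into_right[OF g] by auto
  show ?thesis
  proof (rule ex1I[of _ r0])
    show "r0 < N \<and> Q r0" using r0 eq r by auto
  next
    fix r assume a: "r < N \<and> Q r"
    have "g r \<in> R" using bij_betw_apply[OF g, of r] a by simp
    moreover have "P (g r)" using eq a by blast
    ultimately have "g r = \<rho>" using ex r by blast
    then show "r = r0" using a r0 g unfolding bij_betw_def inj_on_def by auto
  qed
qed

lemma bij_eq_iff:
  assumes "bij_betw p X' X" "x \<in> X'" "y \<in> X"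
  shows "p x = y \<longleftrightarrow> x = inv_into X' p y"
  using assms by (metis bij_betw_def bij_betw_inv_into_right inv_into_f_f)

lemma ex1_cong:
  assumes "\<exists>!\<rho>. \<rho> \<in> R \<and> P \<rho>" "\<And>\<rho>. \<rho> \<in> R \<Longrightarrow> P \<rho> \<longleftrightarrow> Q \<rho>"
  shows "\<exists>!\<rho>. \<rho> \<in> R \<and> Q \<rho>"
  using assms by blast

lemma transport:
  fixes R :: "'r set" and E :: "'r \<Rightarrow> nat \<Rightarrow> 'b" and L :: "'r \<Rightarrow> 'c"
  assumes st: "1 \<le> s" "s \<le> t" "t \<le> k" and v: "v \<ge> 1"
    and X': "finite X'" "card X' = v"
    and Y': "finite Y'"
    and Rfin: "finite R"
    and a: "\<forall>\<rho>\<in>R. \<forall>c<k. E \<rho> c \<in> X'"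
    and b: "\<forall>\<rho>\<in>R. L \<rho> \<in> Y'"
    and c: "\<forall>C. C \<subseteq> {0..<k} \<and> card C = t \<longrightarrow> (\<forall>f\<in>C \<rightarrow>\<^sub>E X'. \<exists>!\<rho>. \<rho>\<in>R \<and> (\<forall>c\<in>C. E \<rho> c = f c))"
    and d: "\<forall>C. C \<subseteq> {0..<k} \<and> card C = s \<longrightarrow> (\<forall>f\<in>C \<rightarrow>\<^sub>E X'. \<forall>y\<in>Y'. \<exists>!\<rho>. \<rho>\<in>R \<and> (\<forall>c\<in>C. E \<rho> c = f c) \<and> L \<rho> = y)"
  shows "\<exists>(X::nat set) (Y::nat set) (A::nat\<Rightarrow>nat\<Rightarrow>nat). is_AOA s t k v X Y A"
proof -
  define C0 where "C0 = {0..<t}"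
  have C0: "C0 \<subseteq> {0..<k}" "card C0 = t" using st by (auto simp: C0_def)
  have cC0: "\<forall>f\<in>C0 \<rightarrow>\<^sub>E X'. \<exists>!\<rho>. \<rho>\<in>R \<and> (\<forall>c\<in>C0. E \<rho> c = f c)"
    by (rule mp[OF spec[OF c, of C0]]) (simp add: C0)
  have "bij_betw (\<lambda>\<rho>. restrict (E \<rho>) C0) R (C0 \<rightarrow>\<^sub>E X')"
  proof (rule bij_betw_imageI)
    show "inj_on (\<lambda>\<rho>. restrict (E \<rho>) C0) R"
    proof (rule inj_onI)
      fix x y assume xy: "x \<in> R" "y \<in> R" "restrict (E x) C0 = restrict (E y) C0"
      have "restrict (E x) C0 \<in> C0 \<rightarrow>\<^sub>E X'" using a xy C0 by auto
      then have ex: "\<exists>!\<rho>. \<rho>\<in>R \<and> (\<forall>c\<in>C0. E \<rho> c = restrict (E x) C0 c)"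
        by (rule bspec[OF cC0])
      have Py: "\<forall>c\<in>C0. E y c = restrict (E x) C0 c" using xy(3) by (metis restrict_apply')
      have Px: "\<forall>c\<in>C0. E x c = restrict (E x) C0 c" by simp
      show "x = y" by (rule ex1_uniq[OF ex xy(1) Px xy(2) Py])
    qed
  next
    show "(\<lambda>\<rho>. restrict (E \<rho>) C0) ` R = C0 \<rightarrow>\<^sub>E X'"
    proof
      show "(\<lambda>\<rho>. restrict (E \<rho>) C0) ` R \<subseteq> C0 \<rightarrow>\<^sub>E X'" using a C0 by auto
    next
      show "C0 \<rightarrow>\<^sub>E X' \<subseteq> (\<lambda>\<rho>. restrict (E \<rho>) C0) ` R"
      proof
        fix f assume f: "f \<in> C0 \<rightarrow>\<^sub>E X'"
        then obtain \<rho> where "\<rho>\<in>R" "\<forall>c\<in>C0. E \<rho> c = f c"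
          using ex1_implies_ex[OF bspec[OF cC0 f]] by blast
        moreover then have "restrict (E \<rho>) C0 = f" using f by (auto simp: PiE_def extensional_def)
        ultimately show "f \<in> (\<lambda>\<rho>. restrict (E \<rho>) C0) ` R" by blast
      qed
    qed
  qed
  then have "card R = card (C0 \<rightarrow>\<^sub>E X')" by (rule bij_betw_same_card)
  then have cardR: "card R = v ^ t"
    using card_PiE[of C0 "\<lambda>_. X'"] X' C0 by (simp add: C0_def)
  define C1 where "C1 = {0..<s}"
  have C1: "C1 \<subseteq> {0..<k}" "card C1 = s" using st by (auto simp: C1_def)
  have dC1: "\<forall>f\<in>C1 \<rightarrow>\<^sub>E X'. \<forall>y\<in>Y'. \<exists>!\<rho>. \<rho>\<in>R \<and> (\<forall>c\<in>C1. E \<rho> c = f c) \<and> L \<rho> = y"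
    by (rule mp[OF spec[OF d, of C1]]) (simp add: C1)
  have "bij_betw (\<lambda>\<rho>. (restrict (E \<rho>) C1, L \<rho>)) R ((C1 \<rightarrow>\<^sub>E X') \<times> Y')"
  proof (rule bij_betw_imageI)
    show "inj_on (\<lambda>\<rho>. (restrict (E \<rho>) C1, L \<rho>)) R"
    proof (rule inj_onI)
      fix x y assume xy: "x \<in> R" "y \<in> R" "(restrict (E x) C1, L x) = (restrict (E y) C1, L y)"
      have "restrict (E x) C1 \<in> C1 \<rightarrow>\<^sub>E X'" using a xy C1 by auto
      then have ex: "\<exists>!\<rho>. \<rho>\<in>R \<and> ((\<forall>c\<in>C1. E \<rho> c = restrict (E x) C1 c) \<and> L \<rho> = L x)"
        using bspec[OF bspec[OF dC1 \<open>restrict (E x) C1 \<in> C1 \<rightarrow>\<^sub>E X'\<close>], of "L x"] b xy(1) by blast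
      have "\<forall>c\<in>C1. E y c = restrict (E x) C1 c" using xy(3) by (metis prod.inject restrict_apply')
      moreover have "L y = L x" using xy(3) by simp
      ultimately have Py: "(\<forall>c\<in>C1. E y c = restrict (E x) C1 c) \<and> L y = L x" by blast
      have Px: "(\<forall>c\<in>C1. E x c = restrict (E x) C1 c) \<and> L x = L x" by simp
      show "x = y" by (rule ex1_uniq[OF ex xy(1) Px xy(2) Py])
    qed
  next
    show "(\<lambda>\<rho>. (restrict (E \<rho>) C1, L \<rho>)) ` R = (C1 \<rightarrow>\<^sub>E X') \<times> Y'"
    proof
      show "(\<lambda>\<rho>. (restrict (E \<rho>) C1, L \<rho>)) ` R \<subseteq> (C1 \<rightarrow>\<^sub>E X') \<times> Y'" using a b C1 by auto
    next
      show "(C1 \<rightarrow>\<^sub>E X') \<times> Y' \<subseteq> (\<lambda>\<rho>. (restrict (E \<rho>) C1, L \<rho>)) ` R"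
      proof
        fix p assume "p \<in> (C1 \<rightarrow>\<^sub>E X') \<times> Y'"
        then obtain f y where f: "f \<in> C1 \<rightarrow>\<^sub>E X'" "y \<in> Y'" "p = (f, y)" by auto
        then obtain \<rho> where "\<rho>\<in>R" "\<forall>c\<in>C1. E \<rho> c = f c" "L \<rho> = y"
          using ex1_implies_ex[OF bspec[OF bspec[OF dC1 f(1)] f(2)]] by blast
        moreover then have "restrict (E \<rho>) C1 = f" using f by (auto simp: PiE_def extensional_def)
        ultimately show "p \<in> (\<lambda>\<rho>. (restrict (E \<rho>) C1, L \<rho>)) ` R" using f by blast
      qed
    qed
  qed
  then have "card R = card ((C1 \<rightarrow>\<^sub>E X') \<times> Y')" by (rule bij_betw_same_card)
  then have "card R = v ^ s * card Y'"
    using card_PiE[of C1 "\<lambda>_. X'"] X' C1 Y' by (simp add: C1_def card_cartesian_product)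
  then have "v ^ s * v ^ (t - s) = v ^ s * card Y'" using cardR st by (simp flip: power_add)
  then have cardY: "card Y' = v ^ (t - s)" using v by simp
  obtain g where g: "bij_betw g {0..<v^t} R"
    using finite_same_card_bij[of "{0..<v^t}" R] Rfin cardR by auto
  obtain p where p: "bij_betw p X' {0..<v}"
    using finite_same_card_bij[of X' "{0..<v}"] X' by auto
  obtain q where q: "bij_betw q Y' {0..<v^(t-s)}"
    using finite_same_card_bij[of Y' "{0..<v^(t-s)}"] Y' cardY by auto
  define A where "A r c = (if c = k then q (L (g r)) else p (E (g r) c))" for r c
  have gR: "r < v^t \<Longrightarrow> g r \<in> R" for r using g by (auto dest: bij_betw_apply)
  have "is_AOA s t k v {0..<v} {0..<v^(t-s)} A"
    unfolding is_AOA_def is_OA_def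
  proof (intro conjI allI impI ballI)
    show "1 \<le> s" "s \<le> t" "t \<le> k" "1 \<le> t" "t \<le> k" using st by auto
    show "finite {0..<v}" "card {0..<v} = v" "finite {0..<v^(t-s)}" "card {0..<v^(t-s)} = v^(t-s)" by auto
  next
    fix r c assume rc: "r < v^t" "c < k"
    then have "E (g r) c \<in> X'" using gR a by blast
    then have "p (E (g r) c) \<in> {0..<v}" by (rule bij_betw_apply[OF p])
    then show "A r c \<in> {0..<v}" using rc unfolding A_def by simp
  next
    fix r assume "r < v^t"
    then have "L (g r) \<in> Y'" using gR b by blast
    then have "q (L (g r)) \<in> {0..<v^(t-s)}" by (rule bij_betw_apply[OF q])
    then show "A r k \<in> {0..<v^(t-s)}" unfolding A_def by simp
  next
    fix C f assume C: "C \<subseteq> {0..<k} \<and> card C = t" and f: "f \<in> C \<rightarrow>\<^sub>E {0..<v}"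
    define f' where "f' = restrict (\<lambda>c. inv_into X' p (f c)) C"
    have f': "f' \<in> C \<rightarrow>\<^sub>E X'" unfolding f'_def by (rule inv_PiE[OF p f])
    have ex: "\<exists>!\<rho>. \<rho>\<in>R \<and> (\<forall>c\<in>C. E \<rho> c = f' c)"
      using bspec[OF mp[OF spec[OF c, of C] C] f'] .
    show "\<exists>!r. r < v^t \<and> (\<forall>c\<in>C. A r c = f c)"
    proof (rule uniq_transport[OF g ex])
      fix r assume r: "r < v^t"
      show "(\<forall>c\<in>C. A r c = f c) \<longleftrightarrow> (\<forall>c\<in>C. E (g r) c = f' c)"
      proof (intro ball_cong refl)
        fix c assume "c \<in> C"
        have ck: "c < k" using C \<open>c \<in> C\<close> by auto
        have fc: "f c \<in> {0..<v}" using f \<open>c \<in> C\<close> by (rule PiE_mem)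
        have Ec: "E (g r) c \<in> X'" using a gR[OF r] ck by blast
        have A1: "A r c = p (E (g r) c)" using ck by (simp add: A_def)
        have f1: "f' c = inv_into X' p (f c)" using \<open>c \<in> C\<close> by (simp add: f'_def)
        show "A r c = f c \<longleftrightarrow> E (g r) c = f' c"
          unfolding A1 f1 by (rule bij_eq_iff[OF p Ec fc])
      qed
    qed
  next
    fix C f y assume C: "C \<subseteq> {0..<k} \<and> card C = s" and f: "f \<in> C \<rightarrow>\<^sub>E {0..<v}"
      and y: "y \<in> {0..<v^(t-s)}"
    define f' where "f' = restrict (\<lambda>c. inv_into X' p (f c)) C"
    have f': "f' \<in> C \<rightarrow>\<^sub>E X'" unfolding f'_def by (rule inv_PiE[OF p f])
    define y' where "y' = inv_into Y' q y"
    have y': "y' \<in> Y'" unfolding y'_def by (rule inv_mem[OF q y])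
    have ex: "\<exists>!\<rho>. \<rho>\<in>R \<and> (\<forall>c\<in>C. E \<rho> c = f' c) \<and> L \<rho> = y'"
      using bspec[OF bspec[OF mp[OF spec[OF d, of C] C] f'] y'] .
    show "\<exists>!r. r < v^t \<and> (\<forall>c\<in>C. A r c = f c) \<and> A r k = y"
    proof (rule uniq_transport[OF g ex])
      fix r assume r: "r < v^t"
      have 1: "(\<forall>c\<in>C. A r c = f c) \<longleftrightarrow> (\<forall>c\<in>C. E (g r) c = f' c)"
      proof (intro ball_cong refl)
        fix c assume "c \<in> C"
        have ck: "c < k" using C \<open>c \<in> C\<close> by auto
        have fc: "f c \<in> {0..<v}" using f \<open>c \<in> C\<close> by (rule PiE_mem)
        have Ec: "E (g r) c \<in> X'" using a gR[OF r] ck by blast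
        have A1: "A r c = p (E (g r) c)" using ck by (simp add: A_def)
        have f1: "f' c = inv_into X' p (f c)" using \<open>c \<in> C\<close> by (simp add: f'_def)
        show "A r c = f c \<longleftrightarrow> E (g r) c = f' c"
          unfolding A1 f1 by (rule bij_eq_iff[OF p Ec fc])
      qed
      have 2: "A r k = y \<longleftrightarrow> L (g r) = y'"
      proof -
        have "L (g r) \<in> Y'" using b gR[OF r] by blast
        then show ?thesis unfolding y'_def using bij_eq_iff[OF q _ y] by (simp add: A_def)
      qed
      show "((\<forall>c\<in>C. A r c = f c) \<and> A r k = y) \<longleftrightarrow> ((\<forall>c\<in>C. E (g r) c = f' c) \<and> L (g r) = y')"
        using 1 2 by simp
    qed
  qed
  then show ?thesis by blast
qed

definition wt :: "nat \<Rightarrow> int" where "wt i = (if even i then 1 else -1)"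

lemma wt_sq: "wt i * wt i = 1" by (simp add: wt_def)

lemma sum_wt: "(\<Sum>i<2*m. wt i) = 0"
  by (induction m) (auto simp: wt_def)

lemma dvdh1: "(m::int) dvd (a + b) \<Longrightarrow> m dvd (a - (-b) mod m)"
  by (metis diff_minus_eq_add dvd_minus_mod mod_eq_dvd_iff)

lemma modh: "(a mod m - b * (c mod m)) mod m = (a - b * c) mod (m::int)"
  by (metis mod_diff_left_eq mod_diff_right_eq mod_mult_right_eq)

lemma eqdvd: "0 \<le> a \<Longrightarrow> a < m \<Longrightarrow> 0 \<le> b \<Longrightarrow> b < m \<Longrightarrow> (m::int) dvd (a - b) \<Longrightarrow> a = b"
  by (smt (verit) dvd_diff_left_iff zdvd_imp_le)

definition Vset :: "nat \<Rightarrow> int set" where "Vset v = {0..<int v}"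
definition Rset :: "nat \<Rightarrow> nat \<Rightarrow> (nat \<Rightarrow> int) set" where
  "Rset k v = {x \<in> {0..<k} \<rightarrow>\<^sub>E Vset v. (\<Sum>i\<in>{0..<k}. x i) mod int v = 0}"
definition Lmap :: "nat \<Rightarrow> nat \<Rightarrow> (nat \<Rightarrow> int) \<Rightarrow> (nat \<Rightarrow> int)" where
  "Lmap k v x = restrict (\<lambda>i. (x i - wt i * x 0) mod int v) {0..<k}"

lemma uniqL:
  assumes v: "v \<ge> 1" and z: "z1 \<in> Rset k v" "z2 \<in> Rset k v" and c: "c < k" "z1 c = z2 c"
    and L: "Lmap k v z1 = Lmap k v z2"
  shows "z1 = z2"
proof
  fix i
  show "z1 i = z2 i"
  proof (cases "i < k")
    case False
    then show ?thesis using z by (auto simp: Rset_def PiE_def extensional_def)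
  next
    case True
    define d where "d = z1 0 - z2 0"
    have dv: "int v dvd ((z1 j - wt j * z1 0) - (z2 j - wt j * z2 0))" if "j < k" for j
    proof -
      have "(z1 j - wt j * z1 0) mod int v = (z2 j - wt j * z2 0) mod int v"
        using fun_cong[OF L, of j] that by (simp add: Lmap_def)
      then show ?thesis by (simp add: mod_eq_dvd_iff)
    qed
    have "int v dvd (- (wt c * d))" using dv[OF c(1)] c(2) by (simp add: d_def algebra_simps)
    then have "int v dvd (wt c * d)" by simp
    then have "int v dvd (wt c * (wt c * d))" by (simp add: dvd_mult)
    then have dd: "int v dvd d" by (simp add: wt_sq flip: mult.assoc)
    have e: "z1 i - z2 i = ((z1 i - wt i * z1 0) - (z2 i - wt i * z2 0)) + wt i * d"
      by (simp add: d_def algebra_simps)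
    have "int v dvd (z1 i - z2 i)" unfolding e
      by (intro dvd_add dv[OF True] dvd_mult dd)
    moreover have "z1 i \<in> Vset v" "z2 i \<in> Vset v" using z True by (auto simp: Rset_def)
    ultimately show ?thesis by (intro eqdvd) (auto simp: Vset_def)
  qed
qed

lemma specific:
  fixes v k :: nat
  assumes v2: "v \<ge> 2" and k2: "k \<ge> 2" and ev: "even k"
  shows "\<exists>(X :: nat set) (Y :: nat set) (A :: nat \<Rightarrow> nat \<Rightarrow> nat).
           is_AOA 1 (k - 1) k v X Y A"
proof (rule transport[where R="Rset k v" and E="\<lambda>x c. x c" and L="Lmap k v" and X'="Vset v"
      and Y'="Lmap k v ` Rset k v"])
  have finR: "finite (Rset k v)"
    by (rule finite_subset[of _ "{0..<k} \<rightarrow>\<^sub>E Vset v"]) (auto simp: Rset_def Vset_def intro!: finite_PiE)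
  show "finite (Rset k v)" by (rule finR)
  show "finite (Lmap k v ` Rset k v)" using finR by simp
  show "1 \<le> (1::nat)" "1 \<le> k - 1" "k - 1 \<le> k" "1 \<le> v" using v2 k2 by auto
  show "finite (Vset v)" "card (Vset v) = v" by (auto simp: Vset_def)
  show "\<forall>\<rho>\<in>Rset k v. \<forall>c<k. \<rho> c \<in> Vset v" by (auto simp: Rset_def)
  show "\<forall>\<rho>\<in>Rset k v. Lmap k v \<rho> \<in> Lmap k v ` Rset k v" by auto
  show "\<forall>C. C \<subseteq> {0..<k} \<and> card C = k - 1 \<longrightarrow>
      (\<forall>f\<in>C \<rightarrow>\<^sub>E Vset v. \<exists>!\<rho>. \<rho> \<in> Rset k v \<and> (\<forall>c\<in>C. \<rho> c = f c))"
  proof (intro allI impI ballI)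
    fix C f assume C: "C \<subseteq> {0..<k} \<and> card C = k - 1" and f: "f \<in> C \<rightarrow>\<^sub>E Vset v"
    have finC: "finite C" using C finite_subset by blast
    have "card ({0..<k} - C) = 1" using C finC k2 by (simp add: card_Diff_subset)
    then obtain m where m: "{0..<k} - C = {m}" by (rule card_1_singletonE)
    have mk: "m < k" "m \<notin> C" using m by auto
    have Ceq: "{0..<k} = insert m C" using m C by auto
    define S where "S = (\<Sum>i\<in>C. f i)"
    define x where "x = f(m := (-S) mod int v)"
    have xC: "\<forall>c\<in>C. x c = f c" using mk unfolding x_def by auto
    show "\<exists>!\<rho>. \<rho> \<in> Rset k v \<and> (\<forall>c\<in>C. \<rho> c = f c)"
    proof (rule ex1I[of _ x])
      have "x \<in> {0..<k} \<rightarrow>\<^sub>E Vset v"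
        using f v2 mk Ceq unfolding x_def by (auto simp: PiE_def Pi_def extensional_def Vset_def)
      moreover have "(\<Sum>i\<in>{0..<k}. x i) = x m + (\<Sum>i\<in>C. x i)"
        unfolding Ceq using finC mk by simp
      moreover have "(\<Sum>i\<in>C. x i) = S" unfolding S_def using xC by simp
      moreover have "((-S) mod int v + S) mod int v = 0" by (simp add: mod_add_left_eq)
      ultimately show "x \<in> Rset k v \<and> (\<forall>c\<in>C. x c = f c)" using xC
        by (simp add: Rset_def x_def)
    next
      fix z assume z: "z \<in> Rset k v \<and> (\<forall>c\<in>C. z c = f c)"
      show "z = x"
      proof
        fix i
        show "z i = x i"
        proof (cases "i = m")
          case True
          have "(\<Sum>i\<in>{0..<k}. z i) = z m + (\<Sum>i\<in>C. z i)"
            unfolding Ceq using finC mk by simp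
          moreover have "(\<Sum>i\<in>C. z i) = S" unfolding S_def using z by simp
          ultimately have "int v dvd (z m + S)" using z by (simp add: Rset_def mod_0_imp_dvd)
          then have "int v dvd (z m - (-S) mod int v)" by (rule dvdh1)
          moreover have "z m \<in> Vset v" using z mk by (auto simp: Rset_def)
          moreover have "0 \<le> (-S) mod int v" "(-S) mod int v < int v" using v2 by auto
          ultimately show ?thesis using True by (intro eqdvd) (auto simp: x_def Vset_def)
        next
          case False
          show ?thesis
          proof (cases "i \<in> C")
            case True then show ?thesis using z False by (simp add: x_def)
          next
            case nC: False
            have "i \<notin> {0..<k} - C" using m False by simp
            then have "\<not> i < k" using nC by simp
            then show ?thesis using z f nC False unfolding x_def
              by (auto simp: Rset_def PiE_def extensional_def)
          qed
        qed
      qed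
    qed
  qed
  show "\<forall>C. C \<subseteq> {0..<k} \<and> card C = 1 \<longrightarrow>
      (\<forall>f\<in>C \<rightarrow>\<^sub>E Vset v. \<forall>y\<in>Lmap k v ` Rset k v.
         \<exists>!\<rho>. \<rho> \<in> Rset k v \<and> (\<forall>c\<in>C. \<rho> c = f c) \<and> Lmap k v \<rho> = y)"
  proof (intro allI impI ballI)
    fix C f y assume C: "C \<subseteq> {0..<k} \<and> card C = 1" and f: "f \<in> C \<rightarrow>\<^sub>E Vset v"
      and y: "y \<in> Lmap k v ` Rset k v"
    have "card C = 1" using C by simp
    then obtain c where c: "C = {c}" by (rule card_1_singletonE)
    have ck: "c < k" using C c by auto
    obtain x' where x': "x' \<in> Rset k v" "y = Lmap k v x'" using y by auto
    have fc: "0 \<le> f c" "f c < int v" using f c by (auto simp: Vset_def)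
    define j where "j = wt c * (f c - x' c)"
    define x where "x = restrict (\<lambda>i. (x' i + wt i * j) mod int v) {0..<k}"
    have xc: "x c = f c"
    proof -
      have "x' c + wt c * j = f c" unfolding j_def by (simp add: wt_sq flip: mult.assoc)
      then show ?thesis using ck fc by (simp add: x_def)
    qed
    have xR: "x \<in> Rset k v"
    proof -
      have "x \<in> {0..<k} \<rightarrow>\<^sub>E Vset v" using v2 by (auto simp: x_def Vset_def)
      moreover have "(\<Sum>i\<in>{0..<k}. x i) mod int v = (\<Sum>i\<in>{0..<k}. x' i + wt i * j) mod int v"
        unfolding x_def by (simp add: mod_sum_eq)
      moreover have "(\<Sum>i\<in>{0..<k}. x' i + wt i * j) = (\<Sum>i\<in>{0..<k}. x' i) + (\<Sum>i\<in>{0..<k}. wt i) * j"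
        by (simp add: sum.distrib sum_distrib_right)
      moreover have "(\<Sum>i\<in>{0..<k}. wt i) = 0"
        using ev sum_wt by (metis atLeast0LessThan evenE)
      ultimately have "(\<Sum>i\<in>{0..<k}. x i) mod int v = (\<Sum>i\<in>{0..<k}. x' i) mod int v" by simp
      also have "\<dots> = 0" using x'(1) unfolding Rset_def by blast
      finally show ?thesis using \<open>x \<in> {0..<k} \<rightarrow>\<^sub>E Vset v\<close> unfolding Rset_def by blast
    qed
    have xL: "Lmap k v x = y"
    proof -
      have "Lmap k v x = Lmap k v x'"
      proof
        fix i
        show "Lmap k v x i = Lmap k v x' i"
        proof (cases "i < k")
          case True
          have "Lmap k v x i = ((x' i + wt i * j) mod int v - wt i * ((x' 0 + wt 0 * j) mod int v)) mod int v"
            using True k2 by (simp add: Lmap_def x_def)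
          also have "\<dots> = ((x' i + wt i * j) - wt i * (x' 0 + wt 0 * j)) mod int v" by (rule modh)
          also have "\<dots> = (x' i - wt i * x' 0) mod int v" by (simp add: wt_def algebra_simps)
          finally show ?thesis using True by (simp add: Lmap_def)
        qed (simp add: Lmap_def)
      qed
      then show ?thesis using x' by simp
    qed
    show "\<exists>!\<rho>. \<rho> \<in> Rset k v \<and> (\<forall>c\<in>C. \<rho> c = f c) \<and> Lmap k v \<rho> = y"
    proof (rule ex1I[of _ x])
      show "x \<in> Rset k v \<and> (\<forall>c\<in>C. x c = f c) \<and> Lmap k v x = y" using xR xc xL c by simp
    next
      fix z assume z: "z \<in> Rset k v \<and> (\<forall>c\<in>C. z c = f c) \<and> Lmap k v z = y"
      have "z c = x c" using z xc c by simp
      moreover have "Lmap k v z = Lmap k v x" using z xL by simp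
      moreover have "(1::nat) \<le> v" using v2 by simp
      ultimately show "z = x" using uniqL[of v z k x c] z xR ck by blast
    qed
  qed
qed

theorem theorem2p4:
  fixes v k :: nat
  assumes "v \<ge> 2" and "k \<ge> 2" and "even k"
  shows "\<exists>(X :: nat set) (Y :: nat set) (A :: nat \<Rightarrow> nat \<Rightarrow> nat).
           is_AOA 1 (k - 1) k v X Y A"
  using specific assms by blast

end
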